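(* Let $n=2k+1$ be odd with $k\ge1$, $\theta=\frac{2\pi}{n+2}$, and for $L>0$ let $\mathcal{N}^{(L)}=\{(\ell_j,r_j): j\in[1:n]\}$ be given by $\ell_n=L$, $r_n=1$, and $$\ell_{2i-1}=\ell_{2i}=\frac{2\sin\theta\,\sin(i\theta)}{\cos(i\theta)-\cos((i+1)\theta)},\qquad r_{2i-1}=r_{2i}=\frac{2\sin\theta\,\sin(i\theta)}{\cos((i-1)\theta)-\cos(i\theta)},\qquad i\in[1:k].$$ Then $\mathsf{C}_1(\mathcal{N}_j)=1$ for all $j\in[1:n-1]$, $\mathsf{C}_1(\mathcal{N}^{(L)})=1$ for every $L>0$, $\mathsf{C}_n(\mathcal{N}^{(L)})\le r_1=2+2\cos\theta$ for every $L>0$, and $\lim_{L\to\infty}\mathsf{C}_n(\mathcal{N}^{(L)})=2+2\cos\theta$. Hence $\lim_{L\to\infty}\frac{\mathsf{C}_1(\mathcal{N}^{(L)})}{\mathsf{C}_n(\mathcal{N}^{(L)})}=\frac{1}{2+2\cos\left(\frac{2\pi}{n+2}\right)}$.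
   Context: For a network $\mathcal{N}=\{(\ell_i,r_i): i\in[1:n]\}$ with nonnegative link capacities, with complements inside $[1:n]$ and maxima over empty sets equal to $0$, the approximate capacity is $\mathsf{C}_n(\mathcal{N})=\max_{\boldsymbol\lambda}\min_{\Omega\subseteq[1:n]}\sum_{\mathcal{S}\subseteq[1:n]}\lambda_{\mathcal{S}}\big(\max_{i\in\mathcal{S}^c\cap\Omega^c}\ell_i+\max_{i\in\mathcal{S}\cap\Omega}r_i\big)$, the maximum being over schedules $\boldsymbol\lambda=(\lambda_{\mathcal{S}})_{\mathcal{S}\subseteq[1:n]}$, $\lambda_{\mathcal{S}}\ge0$, $\sum_{\mathcal{S}}\lambda_{\mathcal{S}}=1$. $\mathsf{C}_1(\mathcal{N}_i)=\frac{\ell_ir_i}{\ell_i+r_i}$ and $\mathsf{C}_1(\mathcal{N})=\max_i\mathsf{C}_1(\mathcal{N}_i)$. *)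

theory Defs
  imports "HOL-Analysis.Analysis"
begin

definition maxz :: "real set \<Rightarrow> real" where
  "maxz A = (if A = {} then 0 else Max A)"

text \<open>A network on [1:n] is given by link capacities l, r :: nat \<Rightarrow> real (only indices 1..n matter).
  A schedule assigns a weight to every subset of [1:n].\<close>
definition schedule :: "nat \<Rightarrow> (nat set \<Rightarrow> real) \<Rightarrow> bool" where
  "schedule n lam \<longleftrightarrow> (\<forall>S\<in>Pow {1..n}. lam S \<ge> 0) \<and> (\<Sum>S\<in>Pow {1..n}. lam S) = 1"

definition cut_value ::
  "nat \<Rightarrow> (nat \<Rightarrow> real) \<Rightarrow> (nat \<Rightarrow> real) \<Rightarrow> (nat set \<Rightarrow> real) \<Rightarrow> nat set \<Rightarrow> real" where
  "cut_value n l r lam \<Omega> =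
     (\<Sum>S\<in>Pow {1..n}. lam S *
        (maxz (l ` (({1..n} - S) \<inter> ({1..n} - \<Omega>))) + maxz (r ` (S \<inter> \<Omega>))))"

text \<open>Approximate capacity C_n: max over schedules of min over cuts (the max is attained,
  so it equals the supremum used here).\<close>
definition Cn :: "nat \<Rightarrow> (nat \<Rightarrow> real) \<Rightarrow> (nat \<Rightarrow> real) \<Rightarrow> real" where
  "Cn n l r = Sup {Min ((\<lambda>\<Omega>. cut_value n l r lam \<Omega>) ` Pow {1..n}) | lam. schedule n lam}"

definition C1_link :: "real \<Rightarrow> real \<Rightarrow> real" where
  "C1_link a b = a * b / (a + b)"

definition C1 :: "nat \<Rightarrow> (nat \<Rightarrow> real) \<Rightarrow> (nat \<Rightarrow> real) \<Rightarrow> real" where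
  "C1 n l r = Max ((\<lambda>i. C1_link (l i) (r i)) ` {1..n})"

text \<open>The network N^(L) with n = 2k+1, theta = 2 pi/(n+2); for j in [1:n-1], i = (j+1) div 2
  (so j = 2i-1 or j = 2i).\<close>
definition thetaN :: "nat \<Rightarrow> real" where
  "thetaN k = 2 * pi / (real (2*k+1) + 2)"

definition netL :: "nat \<Rightarrow> real \<Rightarrow> nat \<Rightarrow> real" where
  "netL k L j = (if j = 2*k+1 then L else
     (let \<theta> = thetaN k; i = real ((j+1) div 2) in
       2 * sin \<theta> * sin (i*\<theta>) / (cos (i*\<theta>) - cos ((i+1)*\<theta>))))"

definition netR :: "nat \<Rightarrow> nat \<Rightarrow> real" where
  "netR k j = (if j = 2*k+1 then 1 else
     (let \<theta> = thetaN k; i = real ((j+1) div 2) in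
       2 * sin \<theta> * sin (i*\<theta>) / (cos ((i-1)*\<theta>) - cos (i*\<theta>))))"

end

theory Submission
  imports Defs
begin


definition lp :: "nat \<Rightarrow> nat \<Rightarrow> real" where
  "lp k i = 2 * sin (thetaN k) * sin (real i * thetaN k) / (cos (real i * thetaN k) - cos ((real i + 1) * thetaN k))"
definition rp :: "nat \<Rightarrow> nat \<Rightarrow> real" where
  "rp k i = 2 * sin (thetaN k) * sin (real i * thetaN k) / (cos ((real i - 1) * thetaN k) - cos (real i * thetaN k))"

lemma netL_lp: "j \<noteq> 2*k+1 \<Longrightarrow> netL k L j = lp k ((j+1) div 2)"
  by (simp add: netL_def lp_def Let_def)
lemma netR_rp: "j \<noteq> 2*k+1 \<Longrightarrow> netR k j = rp k ((j+1) div 2)"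
  by (simp add: netR_def rp_def Let_def)

lemma theta_pos: "thetaN k > 0"
  by (simp add: thetaN_def)

lemma theta_lt: "(real k + 1) * thetaN k < pi"
proof -
  have "(real k + 1) * thetaN k = pi * ((2*real k + 2) / (2*real k + 3))"
    by (simp add: thetaN_def field_simps)
  also have "\<dots> < pi * 1" by (intro mult_strict_left_mono) auto
  finally show ?thesis by simp
qed

lemma theta_sum: "(real k + 2) * thetaN k = 2*pi - (real k + 1) * thetaN k"
  by (simp add: thetaN_def field_simps)

lemma theta_lt_pi: "thetaN k < pi"
  using theta_lt[of k] theta_pos[of k]
  by (smt (verit, ccfv_SIG) mult_le_cancel_right1 of_nat_0_le_iff)

lemma sin_pos: "1 \<le> i \<Longrightarrow> i \<le> k+1 \<Longrightarrow> sin (real i * thetaN k) > 0"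
proof (rule sin_gt_zero)
  assume "1 \<le> i" "i \<le> k+1"
  then show "0 < real i * thetaN k" using theta_pos by simp
  have "real i * thetaN k \<le> (real k + 1) * thetaN k"
    using \<open>i \<le> k+1\<close> theta_pos[of k] by (intro mult_right_mono) auto
  then show "real i * thetaN k < pi" using theta_lt[of k] by linarith
qed

lemma cos_less: "i < j \<Longrightarrow> j \<le> k+1 \<Longrightarrow> cos (real j * thetaN k) < cos (real i * thetaN k)"
proof (rule cos_monotone_0_pi)
  assume "i < j" "j \<le> k+1"
  show "0 \<le> real i * thetaN k" using theta_pos[of k] by simp
  show "real i * thetaN k < real j * thetaN k" using theta_pos[of k] \<open>i<j\<close> by simp
  have "real j * thetaN k \<le> (real k + 1) * thetaN k"
    using \<open>j \<le> k+1\<close> theta_pos[of k] by (intro mult_right_mono) auto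
  then show "real j * thetaN k \<le> pi" using theta_lt[of k] by linarith
qed

lemma cos_diff_id: "cos (x - t) - cos (x + t) = 2 * sin x * sin (t::real)"
  by (simp add: cos_diff cos_add)

lemma denom_pos: "i \<le> k \<Longrightarrow> cos (real i * thetaN k) - cos ((real i + 1) * thetaN k) > 0"
  using cos_less[of i "i+1" k] by (simp add: add.commute)

lemma denomr_pos: "1 \<le> i \<Longrightarrow> i \<le> k+1 \<Longrightarrow> cos ((real i - 1) * thetaN k) - cos (real i * thetaN k) > 0"
  using cos_less[of "i-1" i k] by (simp add: of_nat_diff)

lemma lp0: "lp k 0 = 0" by (simp add: lp_def)

lemma lp_nonneg: "i \<le> k \<Longrightarrow> lp k i \<ge> 0"
proof (cases "i = 0")
  case True then show ?thesis by (simp add: lp0)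
next
  case False
  assume "i \<le> k"
  then show ?thesis unfolding lp_def using False sin_pos[of i k] denom_pos[of i k] theta_pos[of k]
      sin_pos[of 1 k]
    by (intro divide_nonneg_pos) auto
qed

lemma rp_pos: "1 \<le> i \<Longrightarrow> i \<le> k+1 \<Longrightarrow> rp k i > 0"
  unfolding rp_def using sin_pos[of i k] denomr_pos[of i k] sin_pos[of 1 k]
  by (intro divide_pos_pos) auto

lemma rp_k1: "rp k (k+1) = 1"
proof -
  let ?t = "thetaN k"
  have d: "cos (real k * ?t) - cos ((real k + 1) * ?t) > 0" using denom_pos[of k k] by simp
  have c: "cos ((real k + 2) * ?t) = cos ((real k + 1) * ?t)"
    by (simp add: theta_sum)
  have "cos ((real k + 1) * ?t - ?t) - cos ((real k + 1) * ?t + ?t) = 2 * sin ((real k + 1) * ?t) * sin ?t"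
    by (rule cos_diff_id)
  then have "cos (real k * ?t) - cos ((real k + 1) * ?t) = 2 * sin ((real k + 1) * ?t) * sin ?t"
    using c by (simp add: algebra_simps)
  moreover have "sin ?t > 0" "sin ((real k + 1) * ?t) > 0" using sin_pos[of 1 k] sin_pos[of "k+1" k] by (auto simp: add.commute)
  ultimately show ?thesis unfolding rp_def using d by (simp add: field_simps)
qed

lemma rp_1: "rp k 1 = 2 + 2*cos (thetaN k)"
proof -
  let ?t = "thetaN k"
  have "cos ?t < 1" using cos_less[of 0 1 k] by simp
  moreover have "sin ?t * sin ?t = (1 - cos ?t) * (1 + cos ?t)"
    using sin_squared_eq[of ?t] by (simp add: power2_eq_square algebra_simps)
  ultimately show ?thesis unfolding rp_def by (simp add: field_simps) (smt (verit) sin_cos_squared_add3)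
qed

lemma key: "i \<le> k \<Longrightarrow> lp k i + rp k (i+1) = rp k 1"
proof (cases "i = 0")
  case True then show ?thesis by (simp add: lp0)
next
  case False
  assume ik: "i \<le> k"
  let ?t = "thetaN k" let ?x = "real i * ?t"
  define s where "s = sin ?t" define c where "c = cos ?t"
  define sx where "sx = sin ?x" define cx where "cx = cos ?x"
  have d: "cx - (cx * c - sx * s) > 0" using denom_pos[OF ik]
    by (simp add: distrib_right cos_add cx_def c_def sx_def s_def)
  have sc: "s * s = 1 - c * c" unfolding s_def c_def using sin_squared_eq[of ?t] by (simp add: power2_eq_square)
  have e1: "lp k i = 2 * s * sx / (cx - (cx * c - sx * s))"
    unfolding lp_def by (simp add: distrib_right cos_add cx_def c_def sx_def s_def)
  have r1: "(real (i+1) - 1) * ?t = ?x" "real (i+1) * ?t = ?x + ?t" by (simp_all add: algebra_simps)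
  have e2: "rp k (i+1) = 2 * s * (sx * c + cx * s) / (cx - (cx * c - sx * s))"
    unfolding rp_def r1 by (simp add: cos_add sin_add cx_def c_def sx_def s_def)
  define D where "D = cx - (cx * c - sx * s)"
  have num: "2 * s * sx + 2 * s * (sx * c + cx * s) = (2 + 2 * c) * D"
    using sc unfolding D_def by algebra
  have "lp k i + rp k (i+1) = (2 * s * sx + 2 * s * (sx * c + cx * s)) / D"
    unfolding e1 e2 D_def by (simp add: add_divide_distrib)
  also have "\<dots> = 2 + 2 * c" unfolding num using d D_def by simp
  finally have "lp k i + rp k (i+1) = 2 + 2 * c" .
  then show ?thesis using rp_1[of k] by (simp add: c_def)
qed

lemma C1_pair: "1 \<le> i \<Longrightarrow> i \<le> k \<Longrightarrow> C1_link (lp k i) (rp k i) = 1"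
proof -
  assume i: "1 \<le> i" "i \<le> k"
  let ?t = "thetaN k" 
  define s where "s = 2 * sin ?t * sin (real i * ?t)"
  define a where "a = cos (real i * ?t) - cos ((real i + 1) * ?t)"
  define b where "b = cos ((real i - 1) * ?t) - cos (real i * ?t)"
  have a: "a > 0" unfolding a_def using denom_pos i by simp
  have b: "b > 0" unfolding b_def using denomr_pos i by simp
  have "a + b = cos (real i * ?t - ?t) - cos (real i * ?t + ?t)"
    unfolding a_def b_def by (simp add: algebra_simps)
  also have "\<dots> = s" unfolding s_def cos_diff_id by simp
  finally have ab: "a + b = s" .
  have e: "lp k i = s / a" "rp k i = s / b" unfolding lp_def rp_def s_def a_def b_def by simp_all
  have "s > 0" using a b ab by simp
  have "a * s + b * s \<noteq> 0" using a b \<open>s > 0\<close> by (smt (verit) mult_pos_pos)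
  then have "s / a * (s / b) / (s / a + s / b) = s / (a + b)" using a b \<open>s > 0\<close>
    by (simp add: field_simps power2_eq_square)
  then show ?thesis unfolding C1_link_def e using ab a b by simp
qed


lemma maxz_ge: "finite X \<Longrightarrow> x \<in> X \<Longrightarrow> x \<le> maxz X"
  unfolding maxz_def by auto
lemma maxz_nonneg: "finite X \<Longrightarrow> \<forall>x\<in>X. 0 \<le> x \<Longrightarrow> 0 \<le> maxz X"
  unfolding maxz_def by (auto simp: Max_ge_iff)
lemma maxz_le: "finite X \<Longrightarrow> \<forall>x\<in>X. x \<le> c \<Longrightarrow> 0 \<le> c \<Longrightarrow> maxz X \<le> c"
  unfolding maxz_def by auto

lemma netR_rp_all: "j \<le> 2*k+1 \<Longrightarrow> netR k j = rp k ((j+1) div 2)"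
proof (cases "j = 2*k+1")
  case True
  then have "(j+1) div 2 = k+1" by simp
  then show ?thesis using True rp_k1[of k] by (simp add: netR_def)
qed (simp add: netR_rp)

lemma rp_le: "1 \<le> i \<Longrightarrow> i \<le> k+1 \<Longrightarrow> rp k i \<le> rp k 1"
proof -
  assume i: "1 \<le> i" "i \<le> k+1"
  then have "i - 1 + 1 = i" "i - 1 \<le> k" by auto
  then show ?thesis using key[of "i-1" k] lp_nonneg[of "i-1" k] by simp
qed

lemma netR_bounds: "1 \<le> j \<Longrightarrow> j \<le> 2*k+1 \<Longrightarrow> 0 \<le> netR k j \<and> netR k j \<le> rp k 1"
proof -
  assume j: "1 \<le> j" "j \<le> 2*k+1"
  then have i: "1 \<le> (j+1) div 2" "(j+1) div 2 \<le> k+1" by auto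
  show ?thesis using netR_rp_all[OF j(2)] rp_pos[OF i] rp_le[OF i] by simp
qed

lemma netL_nonneg: "L > 0 \<Longrightarrow> j \<le> 2*k+1 \<Longrightarrow> 0 \<le> netL k L j"
proof (cases "j = 2*k+1")
  case True
  assume "L > 0" then show ?thesis using True by (simp add: netL_def)
next
  case False
  assume "j \<le> 2*k+1"
  then have "(j+1) div 2 \<le> k" using False by auto
  then show ?thesis using False netL_lp[OF False] lp_nonneg by simp
qed

definition gv :: "nat \<Rightarrow> real \<Rightarrow> nat set \<Rightarrow> nat set \<Rightarrow> real" where
  "gv k L S \<Omega> = maxz (netL k L ` (({1..2*k+1} - S) \<inter> ({1..2*k+1} - \<Omega>))) + maxz (netR k ` (S \<inter> \<Omega>))"

lemma gv_nonneg: "L > 0 \<Longrightarrow> \<Omega> \<subseteq> {1..2*k+1} \<Longrightarrow> 0 \<le> gv k L S \<Omega>"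
proof -
  assume L: "L > 0" and O: "\<Omega> \<subseteq> {1..2*k+1}"
  have f: "finite (S \<inter> \<Omega>)" using O by (meson finite_Int finite_atLeastAtMost finite_subset)
  have "\<forall>x\<in>netR k ` (S \<inter> \<Omega>). 0 \<le> x" using O netR_bounds by fastforce
  then show ?thesis unfolding gv_def using f L
    by (intro add_nonneg_nonneg maxz_nonneg) (auto intro: netL_nonneg)
qed

lemma cut_main:
  assumes L: "L > 0" and Om: "\<Omega> \<subseteq> {1..2*k+1}" and nO: "2*k+1 \<in> \<Omega>"
  shows "gv k L {j\<in>{1..2*k+1}. odd j} \<Omega> + gv k L ({j\<in>{1..2*k+1}. even j} \<union> {2*k+1}) \<Omega> \<ge> 2 * rp k 1"
proof -
  define U where "U = {1..2*k+1}"
  define A where "A = {j\<in>U. odd j}"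
  define B where "B = {j\<in>U. even j} \<union> {2*k+1}"
  define q where "q = (LEAST i. 1 \<le> i \<and> 2*i-1 \<in> \<Omega>)"
  define q' where "q' = (LEAST i. 1 \<le> i \<and> (i = k+1 \<or> 2*i \<in> \<Omega>))"
  have Pq: "1 \<le> q \<and> 2*q-1 \<in> \<Omega>" unfolding q_def
    by (rule LeastI[of _ "k+1"]) (use nO in auto)
  have q_le: "q \<le> k+1" unfolding q_def
    by (rule Least_le) (use nO in auto)
  have q_min: "\<And>i. 1 \<le> i \<Longrightarrow> i < q \<Longrightarrow> 2*i-1 \<notin> \<Omega>"
    unfolding q_def using not_less_Least by blast
  have Pq': "1 \<le> q' \<and> (q' = k+1 \<or> 2*q' \<in> \<Omega>)" unfolding q'_def
    by (rule LeastI[of _ "k+1"]) auto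
  have q'_le: "q' \<le> k+1" unfolding q'_def
    by (rule Least_le) auto
  have q'_min: "\<And>i. 1 \<le> i \<Longrightarrow> i < q' \<Longrightarrow> 2*i \<notin> \<Omega>"
    unfolding q'_def using not_less_Least q'_le by fastforce
  have fin: "finite (netL k L ` X)" "finite (netR k ` Y)" if "X \<subseteq> U" "Y \<subseteq> U" for X Y
    using that finite_subset[of _ U] unfolding U_def by auto
  have lnn: "\<forall>x\<in>netL k L ` X. 0 \<le> x" if "X \<subseteq> U" for X
    using that netL_nonneg[OF L] unfolding U_def by auto
  have A1: "rp k q \<le> maxz (netR k ` (A \<inter> \<Omega>))"
  proof (rule maxz_ge)
    show "finite (netR k ` (A \<inter> \<Omega>))" using fin[of "A \<inter> \<Omega>" "A \<inter> \<Omega>"] unfolding A_def by auto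
    have "2*q-1 \<in> A \<inter> \<Omega>" using Pq q_le unfolding A_def U_def by auto
    moreover have "netR k (2*q-1) = rp k q" using netR_rp_all[of "2*q-1" k] Pq q_le by simp
    ultimately show "rp k q \<in> netR k ` (A \<inter> \<Omega>)" by force
  qed
  have A2: "lp k (q'-1) \<le> maxz (netL k L ` ((U - A) \<inter> (U - \<Omega>)))"
  proof (cases "q' = 1")
    case True
    have "(U - A) \<inter> (U - \<Omega>) \<subseteq> U" "(U - B) \<inter> (U - \<Omega>) \<subseteq> U" by auto
    then show ?thesis using True lp0[of k] by (simp add: maxz_nonneg fin lnn)
  next
    case False
    let ?j = "2*(q'-1)"
    have "1 \<le> q'-1" using False Pq' by auto
    then have "?j \<notin> \<Omega>" using q'_min[of "q'-1"] by auto
    then have "?j \<in> (U - A) \<inter> (U - \<Omega>)" using False Pq' q'_le unfolding A_def U_def by auto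
    moreover have "netL k L ?j = lp k (q'-1)" proof -
      have "?j \<noteq> 2*k+1" by presburger
      then show ?thesis using netL_lp[of ?j k L] by simp
    qed
    ultimately have "lp k (q'-1) \<in> netL k L ` ((U - A) \<inter> (U - \<Omega>))" by (metis image_eqI)
    moreover have "finite (netL k L ` ((U - A) \<inter> (U - \<Omega>)))" unfolding U_def by auto
    ultimately show ?thesis by (intro maxz_ge)
  qed
  have B1: "rp k q' \<le> maxz (netR k ` (B \<inter> \<Omega>))"
  proof (rule maxz_ge)
    show "finite (netR k ` (B \<inter> \<Omega>))" using fin[of "B \<inter> \<Omega>" "B \<inter> \<Omega>"] unfolding B_def U_def by auto
    define j where "j = (if q' = k+1 then 2*k+1 else 2*q')"
    have "j \<in> B \<inter> \<Omega>" using Pq' q'_le nO unfolding B_def U_def j_def by auto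
    moreover have "netR k j = rp k q'" using netR_rp_all[of j k] Pq' q'_le unfolding j_def by auto
    ultimately show "rp k q' \<in> netR k ` (B \<inter> \<Omega>)" by force
  qed
  have B2: "lp k (q-1) \<le> maxz (netL k L ` ((U - B) \<inter> (U - \<Omega>)))"
  proof (cases "q = 1")
    case True
    have "(U - A) \<inter> (U - \<Omega>) \<subseteq> U" "(U - B) \<inter> (U - \<Omega>) \<subseteq> U" by auto
    then show ?thesis using True lp0[of k] by (simp add: maxz_nonneg fin lnn)
  next
    case False
    let ?j = "2*(q-1)-1"
    have "1 \<le> q-1" using False Pq by auto
    then have "?j \<notin> \<Omega>" using q_min[of "q-1"] by auto
    then have "?j \<in> (U - B) \<inter> (U - \<Omega>)" using False Pq q_le unfolding B_def U_def by auto
    moreover have "netL k L ?j = lp k (q-1)" using netL_lp[of ?j k L] False Pq q_le by simp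
    ultimately have "lp k (q-1) \<in> netL k L ` ((U - B) \<inter> (U - \<Omega>))" by (metis image_eqI)
    moreover have "finite (netL k L ` ((U - B) \<inter> (U - \<Omega>)))" unfolding U_def by auto
    ultimately show ?thesis by (intro maxz_ge)
  qed
  have k1: "lp k (q-1) + rp k q = rp k 1" using key[of "q-1" k] Pq q_le by simp
  have k2: "lp k (q'-1) + rp k q' = rp k 1" using key[of "q'-1" k] Pq' q'_le by simp
  show ?thesis using A1 A2 B1 B2 k1 k2 unfolding gv_def A_def B_def U_def by linarith
qed



definition lamd :: "nat \<Rightarrow> real \<Rightarrow> nat set \<Rightarrow> real" where
  "lamd k d S = (if S = {j\<in>{1..2*k+1}. odd j} then (1-d)/2
     else if S = {j\<in>{1..2*k+1}. even j} \<union> {2*k+1} then (1-d)/2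
     else if S = {} then d else 0)"

lemma sum_three:
  fixes h :: "'a set \<Rightarrow> real" and a b c :: real
  assumes "finite U" "A \<subseteq> U" "B \<subseteq> U" "A \<noteq> B" "A \<noteq> {}" "B \<noteq> {}"
  shows "(\<Sum>S\<in>Pow U. (if S = A then a else if S = B then b else if S = {} then c else 0) * h S)
      = a * h A + b * h B + c * h {}"
proof -
  have "(\<Sum>S\<in>Pow U. (if S = A then a else if S = B then b else if S = {} then c else 0) * h S)
     = (\<Sum>S\<in>{A,B,{}}. (if S = A then a else if S = B then b else if S = {} then c else 0) * h S)"
  proof (rule sum.mono_neutral_right)
    show "finite (Pow U)" using assms by simp
    show "{A,B,{}} \<subseteq> Pow U" using assms by blast
    show "\<forall>i\<in>Pow U - {A,B,{}}. (if i = A then a else if i = B then b else if i = {} then c else 0) * h i = 0"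
    proof
      fix i assume "i \<in> Pow U - {A,B,{}}"
      then have "i \<noteq> A" "i \<noteq> B" "i \<noteq> {}" by blast+
      then show "(if i = A then a else if i = B then b else if i = {} then c else 0) * h i = 0" by simp
    qed
  qed
  then show ?thesis using assms by simp
qed

lemma AB_facts:
  assumes "k \<ge> 1"
  shows "{j::nat\<in>{1..2*k+1}. odd j} \<subseteq> {1..2*k+1}" "{j\<in>{1..2*k+1}. even j} \<union> {2*k+1} \<subseteq> {1..2*k+1}"
    "{j\<in>{1..2*k+1}. odd j} \<noteq> {j\<in>{1..2*k+1}. even j} \<union> {2*k+1}"
    "{j\<in>{1..2*k+1}. odd j} \<noteq> {}" "{j\<in>{1..2*k+1}. even j} \<union> {2*k+1} \<noteq> {}"
proof -
  have "1 \<in> {j::nat\<in>{1..2*k+1}. odd j}" by auto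
  moreover have "1 \<notin> {j\<in>{1..2*k+1}. even j} \<union> {2*k+1}" using assms by auto
  ultimately show "{j\<in>{1..2*k+1}. odd j} \<noteq> {j\<in>{1..2*k+1}. even j} \<union> {2*k+1}" by blast
qed auto

lemma lamd_sum:
  assumes "k \<ge> 1"
  shows "(\<Sum>S\<in>Pow {1..2*k+1}. lamd k d S * h S) =
     (1-d)/2 * h {j\<in>{1..2*k+1}. odd j} + (1-d)/2 * h ({j\<in>{1..2*k+1}. even j} \<union> {2*k+1}) + d * h {}"
  unfolding lamd_def using AB_facts[OF assms] by (intro sum_three) auto

lemma lamd_schedule:
  assumes "k \<ge> 1" "0 \<le> d" "d \<le> 1"
  shows "schedule (2*k+1) (lamd k d)"
proof -
  have "(\<Sum>S\<in>Pow {1..2*k+1}. lamd k d S) = (\<Sum>S\<in>Pow {1..2*k+1}. lamd k d S * 1)" by simp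
  also have "\<dots> = 1" unfolding lamd_sum[OF assms(1)] by simp
  finally show ?thesis unfolding schedule_def lamd_def using assms by auto
qed

lemma cut_lamd:
  assumes "k \<ge> 1"
  shows "cut_value (2*k+1) (netL k L) (netR k) (lamd k d) \<Omega> =
     (1-d)/2 * gv k L {j\<in>{1..2*k+1}. odd j} \<Omega> + (1-d)/2 * gv k L ({j\<in>{1..2*k+1}. even j} \<union> {2*k+1}) \<Omega> + d * gv k L {} \<Omega>"
  unfolding cut_value_def using lamd_sum[OF assms, of d "\<lambda>S. gv k L S \<Omega>"] unfolding gv_def by simp

lemma elem_le:
  assumes "schedule (2*k+1) lam"
  shows "Min ((\<lambda>\<Omega>. cut_value (2*k+1) (netL k L) (netR k) lam \<Omega>) ` Pow {1..2*k+1}) \<le> rp k 1"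
proof -
  let ?U = "{1..2*k+1}"
  have r1: "0 \<le> rp k 1" using rp_pos[of 1 k] by simp
  have "Min ((\<lambda>\<Omega>. cut_value (2*k+1) (netL k L) (netR k) lam \<Omega>) ` Pow ?U) \<le> cut_value (2*k+1) (netL k L) (netR k) lam ?U"
    by (rule Min_le) auto
  also have "\<dots> \<le> (\<Sum>S\<in>Pow ?U. lam S * rp k 1)"
    unfolding cut_value_def
  proof (rule sum_mono)
    fix S assume S: "S \<in> Pow ?U"
    have "maxz (netR k ` (S \<inter> ?U)) \<le> rp k 1"
      using S r1 netR_bounds[of _ k] by (intro maxz_le) (auto intro: finite_subset[of _ ?U])
    moreover have "lam S \<ge> 0" using assms S unfolding schedule_def by auto
    ultimately show "lam S * (maxz (netL k L ` ((?U - S) \<inter> (?U - ?U))) + maxz (netR k ` (S \<inter> ?U))) \<le> lam S * rp k 1"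
      by (simp add: maxz_def mult_left_mono)
  qed
  also have "\<dots> = rp k 1" using assms unfolding schedule_def by (simp add: sum_distrib_right[symmetric])
  finally show ?thesis .
qed

lemma Cn_upper:
  assumes "k \<ge> 1"
  shows "Cn (2*k+1) (netL k L) (netR k) \<le> rp k 1"
  unfolding Cn_def
  by (rule cSup_least) (use lamd_schedule[OF assms, of 0] elem_le in auto)

lemma Cn_lower:
  assumes k: "k \<ge> 1" and L: "L \<ge> rp k 1"
  shows "rp k 1 - (rp k 1)^2 / L \<le> Cn (2*k+1) (netL k L) (netR k)"
proof -
  let ?U = "{1..2*k+1}"
  let ?r = "rp k 1"
  have r1: "0 < ?r" using rp_pos[of 1 k] by simp
  have Lp: "L > 0" using L r1 by linarith
  define d where "d = ?r / L"
  have d0: "0 \<le> d" "d \<le> 1" unfolding d_def using r1 Lp L by auto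
  have dL: "d * L = ?r" unfolding d_def using Lp by simp
  have b: "?r - ?r^2 / L = (1 - d) * ?r" unfolding d_def by (simp add: power2_eq_square algebra_simps)
  let ?M = "Min ((\<lambda>\<Omega>. cut_value (2*k+1) (netL k L) (netR k) (lamd k d) \<Omega>) ` Pow ?U)"
  have "?r - ?r^2 / L \<le> ?M"
  proof (rule Min.boundedI)
    show "finite ((\<lambda>\<Omega>. cut_value (2*k+1) (netL k L) (netR k) (lamd k d) \<Omega>) ` Pow ?U)" by simp
    show "(\<lambda>\<Omega>. cut_value (2*k+1) (netL k L) (netR k) (lamd k d) \<Omega>) ` Pow ?U \<noteq> {}" by blast
    fix x assume "x \<in> (\<lambda>\<Omega>. cut_value (2*k+1) (netL k L) (netR k) (lamd k d) \<Omega>) ` Pow ?U"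
    then obtain \<Omega> where O: "\<Omega> \<subseteq> ?U" and x: "x = cut_value (2*k+1) (netL k L) (netR k) (lamd k d) \<Omega>" by auto
    have gA: "0 \<le> gv k L {j\<in>?U. odd j} \<Omega>" and gB: "0 \<le> gv k L ({j\<in>?U. even j} \<union> {2*k+1}) \<Omega>"
      and g0: "0 \<le> gv k L {} \<Omega>" using gv_nonneg[OF Lp O] by auto
    have x': "x = (1-d)/2 * gv k L {j\<in>?U. odd j} \<Omega> + (1-d)/2 * gv k L ({j\<in>?U. even j} \<union> {2*k+1}) \<Omega> + d * gv k L {} \<Omega>"
      unfolding x by (rule cut_lamd[OF k])
    show "?r - ?r^2 / L \<le> x"
    proof (cases "2*k+1 \<in> \<Omega>")
      case True
      have c: "gv k L {j\<in>?U. odd j} \<Omega> + gv k L ({j\<in>?U. even j} \<union> {2*k+1}) \<Omega> \<ge> 2 * ?r"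
        by (rule cut_main[OF Lp O True])
      have "(1 - d) * ?r \<le> (1-d)/2 * (gv k L {j\<in>?U. odd j} \<Omega> + gv k L ({j\<in>?U. even j} \<union> {2*k+1}) \<Omega>)"
        using mult_left_mono[OF c, of "(1-d)/2"] d0 by simp
      moreover have "0 \<le> d * gv k L {} \<Omega>" using d0 g0 by simp
      ultimately show ?thesis unfolding x' b by (simp add: algebra_simps)
    next
      case False
      have "L \<le> maxz (netL k L ` ((?U - {}) \<inter> (?U - \<Omega>)))"
      proof (rule maxz_ge)
        show "finite (netL k L ` ((?U - {}) \<inter> (?U - \<Omega>)))" by auto
        have "2*k+1 \<in> (?U - {}) \<inter> (?U - \<Omega>)" using False by auto
        then show "L \<in> netL k L ` ((?U - {}) \<inter> (?U - \<Omega>))"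
          by (metis image_eqI netL_def)
      qed
      moreover have "0 \<le> maxz (netR k ` ({} \<inter> \<Omega>))" by (simp add: maxz_def)
      ultimately have "L \<le> gv k L {} \<Omega>" unfolding gv_def by simp
      then have "?r \<le> d * gv k L {} \<Omega>" using dL d0 mult_left_mono by metis
      moreover have "0 \<le> (1-d)/2 * gv k L {j\<in>?U. odd j} \<Omega>" "0 \<le> (1-d)/2 * gv k L ({j\<in>?U. even j} \<union> {2*k+1}) \<Omega>"
        using gA gB d0 by simp_all
      moreover have "?r - ?r^2 / L \<le> ?r" using Lp by simp
      ultimately show ?thesis unfolding x' by linarith
    qed
  qed
  also have "?M \<le> Cn (2*k+1) (netL k L) (netR k)"
    unfolding Cn_def
  proof (rule cSup_upper)
    show "?M \<in> {Min ((\<lambda>\<Omega>. cut_value (2*k+1) (netL k L) (netR k) lam \<Omega>) ` Pow ?U) | lam. schedule (2*k+1) lam}"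
      using lamd_schedule[OF k d0] by blast
    show "bdd_above {Min ((\<lambda>\<Omega>. cut_value (2*k+1) (netL k L) (netR k) lam \<Omega>) ` Pow ?U) | lam. schedule (2*k+1) lam}"
      by (rule bdd_aboveI[of _ "rp k 1"]) (use elem_le in auto)
  qed
  finally show ?thesis .
qed



theorem mainTheorem9:
  fixes k n :: nat and \<theta> :: real
  assumes "k \<ge> 1" and "n = 2*k+1" and "\<theta> = 2 * pi / (real n + 2)"
  shows "(\<forall>L. \<forall>j\<in>{1..n-1}. C1_link (netL k L j) (netR k j) = 1)
    \<and> (\<forall>L>0. C1 n (netL k L) (netR k) = 1)
    \<and> (\<forall>L>0. Cn n (netL k L) (netR k) \<le> netR k 1 \<and> netR k 1 = 2 + 2 * cos \<theta>)
    \<and> ((\<lambda>L. Cn n (netL k L) (netR k)) \<longlongrightarrow> 2 + 2 * cos \<theta>) at_top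
    \<and> ((\<lambda>L. C1 n (netL k L) (netR k) / Cn n (netL k L) (netR k))
         \<longlongrightarrow> 1 / (2 + 2 * cos (2 * pi / (real n + 2)))) at_top"
proof -
  have th: "\<theta> = thetaN k" using assms(2,3) by (simp add: thetaN_def)
  have r1: "netR k 1 = rp k 1" using netR_rp[of 1 k] assms(1) by simp
  have r1v: "rp k 1 = 2 + 2 * cos \<theta>" using rp_1[of k] th by simp
  have r1p: "rp k 1 > 0" using rp_pos[of 1 k] by simp
  have P1: "\<forall>L. \<forall>j\<in>{1..n-1}. C1_link (netL k L j) (netR k j) = 1"
  proof (intro allI ballI)
    fix L j assume j: "j \<in> {1..n-1}"
    then have jn: "j \<noteq> 2*k+1" using assms(2) by auto
    have i: "1 \<le> (j+1) div 2" "(j+1) div 2 \<le> k" using j assms(2) by auto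
    show "C1_link (netL k L j) (netR k j) = 1"
      unfolding netL_lp[OF jn] netR_rp[OF jn] by (rule C1_pair[OF i])
  qed
  have P2: "\<forall>L>0. C1 n (netL k L) (netR k) = 1"
  proof (intro allI impI)
    fix L :: real assume L: "L > 0"
    show "C1 n (netL k L) (netR k) = 1" unfolding C1_def
    proof (rule Max_eqI)
      show "finite ((\<lambda>i. C1_link (netL k L i) (netR k i)) ` {1..n})" by simp
      show "1 \<in> (\<lambda>i. C1_link (netL k L i) (netR k i)) ` {1..n}"
        using P1 assms(1,2) by (intro image_eqI[of _ _ 1]) auto
      fix y assume "y \<in> (\<lambda>i. C1_link (netL k L i) (netR k i)) ` {1..n}"
      then obtain j where j: "j \<in> {1..n}" and y: "y = C1_link (netL k L j) (netR k j)" by auto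
      show "y \<le> 1"
      proof (cases "j = n")
        case True
        then have "y = L / (L + 1)" using y assms(2) by (simp add: netL_def netR_def C1_link_def)
        then show ?thesis using L by simp
      next
        case False
        then show ?thesis using P1 j y by auto
      qed
    qed
  qed
  have up: "\<And>L. Cn n (netL k L) (netR k) \<le> rp k 1" using Cn_upper[OF assms(1)] assms(2) by simp
  have P3: "\<forall>L>0. Cn n (netL k L) (netR k) \<le> netR k 1 \<and> netR k 1 = 2 + 2 * cos \<theta>"
    using up r1 r1v by simp
  have lim0: "((\<lambda>L. rp k 1 - (rp k 1)^2 / L) \<longlongrightarrow> rp k 1) at_top"
  proof -
    have "((\<lambda>L::real. (rp k 1)^2 / L) \<longlongrightarrow> 0) at_top"
      by (intro tendsto_divide_0[OF tendsto_const] filterlim_at_top_imp_at_infinity filterlim_ident)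
    then show ?thesis using tendsto_diff[OF tendsto_const[of "rp k 1"]] by fastforce
  qed
  have P4': "((\<lambda>L. Cn n (netL k L) (netR k)) \<longlongrightarrow> rp k 1) at_top"
  proof (rule tendsto_sandwich[OF _ _ lim0 tendsto_const])
    show "\<forall>\<^sub>F L in at_top. rp k 1 - (rp k 1)^2 / L \<le> Cn n (netL k L) (netR k)"
      by (rule eventually_mono[OF eventually_ge_at_top[of "rp k 1"]]) (use Cn_lower[OF assms(1)] assms(2) in auto)
    show "\<forall>\<^sub>F L in at_top. Cn n (netL k L) (netR k) \<le> rp k 1" using up by simp
  qed
  have P5: "((\<lambda>L. C1 n (netL k L) (netR k) / Cn n (netL k L) (netR k))
         \<longlongrightarrow> 1 / (2 + 2 * cos (2 * pi / (real n + 2)))) at_top"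
  proof -
    have "((\<lambda>L. 1 / Cn n (netL k L) (netR k)) \<longlongrightarrow> 1 / rp k 1) at_top"
      using tendsto_divide[OF tendsto_const P4'] r1p by simp
    moreover have "\<forall>\<^sub>F L in at_top. 1 / Cn n (netL k L) (netR k) = C1 n (netL k L) (netR k) / Cn n (netL k L) (netR k)"
      by (rule eventually_mono[OF eventually_gt_at_top[of 0]]) (use P2 in auto)
    ultimately have "((\<lambda>L. C1 n (netL k L) (netR k) / Cn n (netL k L) (netR k)) \<longlongrightarrow> 1 / rp k 1) at_top"
      by (rule Lim_transform_eventually)
    then show ?thesis using r1v assms(3) by simp
  qed
  have P4: "((\<lambda>L. Cn n (netL k L) (netR k)) \<longlongrightarrow> 2 + 2 * cos \<theta>) at_top" using P4' r1v by simp
  show ?thesis using P1 P2 P3 P4 P5 by (intro conjI)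
qed


end
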